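(* Assume $F=f+h$ is uniformly convex of degree $q\ge2$ with constant $\sigma_q>0$, that $p>q-1$, that $F$ attains its minimum $F^*$ at $x^*$, and consider the Regularized Composite Tensor Method $x_0\in\operatorname{dom}h$, $x_{k+1}=T_H(x_k)$, $k\ge0$, with $H=pL_p$. Assume $D=\sup_{x\in\operatorname{dom}h}\{\|x-x^*\|:F(x)\le F(x_0)\}<+\infty$ and set $$\omega_{p,q}=\frac{p+1}{p!}\Big(\frac{q-1}{q}\Big)^{q-1}\frac{L_pD^{p-q+1}}{\sigma_q}.$$ Let $$N=\Big\lceil 2p\Big(\frac{q^q}{(q-1)^{q-1}}\,\omega_{p,q}^{\frac{p+1}{p}}\Big)^{\frac1{p-q+1}}\Big\rceil+2.$$ Then after $N$ iterations the method is in the region $$\mathcal{Q}=\Big\{x\in\operatorname{dom}h:\ F(x)-F^*\le\frac1q\Big(\frac{\sigma_q^{p+1}}{(q-1)^{q-1}}\Big(\frac{p!}{(p+1)L_p}\Big)^q\Big)^{\frac1{p-q+1}}\Big\},$$ i.e. $x_N\in\mathcal{Q}$.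
   Context: $\mathbb{E}$ is a finite-dimensional real vector space with dual $\mathbb{E}^*$; $B:\mathbb{E}\to\mathbb{E}^*$ is a fixed self-adjoint positive-definite operator, $\|x\|=\langle Bx,x\rangle^{1/2}$, $\|g\|_*=\langle g,B^{-1}g\rangle^{1/2}$. Let $p\ge 2$ be an integer, $h:\mathbb{E}\to\mathbb{R}\cup\{+\infty\}$ proper closed convex, and $f$ convex and $p$ times differentiable on an open convex set containing $\operatorname{dom}h$, with $\|D^pf(x)-D^pf(y)\|\le L_p\|x-y\|$ for $x,y\in\operatorname{dom}h$, $0<L_p<\infty$, where for a symmetric $p$-linear form $\|A\|=\max_{\|u\|\le1}|A[u]^p|$. $F=f+h$. Taylor polynomial $\Omega_p(f,x;y)=f(x)+\sum_{k=1}^p\frac1{k!}D^kf(x)[y-x]^k$. For $x\in\operatorname{dom}h$, $T_H(x)=\arg\min_{y\in\mathbb{E}}\{\Omega_p(f,x;y)+\frac{H}{(p+1)!}\|y-x\|^{p+1}+h(y)\}$. Uniform convexity of degree $q$ with constant $\sigma_q$: $\langle G_x-G_y,x-y\rangle\ge\sigma_q\|x-y\|^q$ for all $x,y\in\operatorname{dom}h$, $G_x\in\partial F(x)$, $G_y\in\partial F(y)$. The region $\mathcal{Q}$ above is the paper's region of superlinear convergence with $L_p+H=(p+1)L_p$. *)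

theory Defs
  imports "HOL-Analysis.Analysis"
begin

text \<open>The space E is a euclidean_space type; the dual space is identified with E via the
standard inner product, and the operator B is a self-adjoint positive-definite linear map.\<close>

definition self_adj_pos_def :: "('a::euclidean_space \<Rightarrow> 'a) \<Rightarrow> bool" where
  "self_adj_pos_def B \<longleftrightarrow> linear B \<and> (\<forall>x y. inner (B x) y = inner x (B y))
     \<and> (\<forall>x. x \<noteq> 0 \<longrightarrow> inner (B x) x > 0)"

definition bnorm :: "('a::euclidean_space \<Rightarrow> 'a) \<Rightarrow> 'a \<Rightarrow> real" where
  "bnorm B x = sqrt (inner (B x) x)"

text \<open>Derivatives: Df k x is the k-th derivative of f at x, a k-linear form applied to a
list of k vectors. D^k f(x)[u]^k is Df k x (replicate k u).\<close>

definition p_times_diff_on ::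
  "nat \<Rightarrow> 'a::euclidean_space set \<Rightarrow> ('a \<Rightarrow> real) \<Rightarrow> (nat \<Rightarrow> 'a \<Rightarrow> 'a list \<Rightarrow> real) \<Rightarrow> bool" where
  "p_times_diff_on p U f Df \<longleftrightarrow>
     (\<forall>x\<in>U. Df 0 x [] = f x) \<and>
     (\<forall>k<p. \<forall>x\<in>U. \<forall>us. length us = k \<longrightarrow>
        ((\<lambda>z. Df k z us) has_derivative (\<lambda>v. Df (Suc k) x (us @ [v]))) (at x))"

definition form_norm :: "('a::euclidean_space \<Rightarrow> 'a) \<Rightarrow> nat \<Rightarrow> ('a list \<Rightarrow> real) \<Rightarrow> real" where
  "form_norm B p A = Sup {\<bar>A (replicate p u)\<bar> | u. bnorm B u \<le> 1}"

definition taylor ::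
  "('a::euclidean_space \<Rightarrow> real) \<Rightarrow> (nat \<Rightarrow> 'a \<Rightarrow> 'a list \<Rightarrow> real) \<Rightarrow> nat \<Rightarrow> 'a \<Rightarrow> 'a \<Rightarrow> real" where
  "taylor f Df p x y = f x + (\<Sum>k=1..p. Df k x (replicate k (y - x)) / fact k)"

text \<open>h proper closed convex with domain S: h is +infinity outside S.\<close>

definition proper_closed_convex :: "'a::euclidean_space set \<Rightarrow> ('a \<Rightarrow> real) \<Rightarrow> bool" where
  "proper_closed_convex S h \<longleftrightarrow> S \<noteq> {} \<and> convex S \<and> convex_on S h
     \<and> closed {(x, t). x \<in> S \<and> h x \<le> t}"

text \<open>Subdifferential of F (extended by +infinity outside S) at x in S.\<close>

definition subdiff :: "'a::euclidean_space set \<Rightarrow> ('a \<Rightarrow> real) \<Rightarrow> 'a \<Rightarrow> 'a set" where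
  "subdiff S F x = {G. \<forall>y\<in>S. F y \<ge> F x + inner G (y - x)}"

definition uniformly_convex ::
  "'a::euclidean_space set \<Rightarrow> ('a \<Rightarrow> 'a) \<Rightarrow> ('a \<Rightarrow> real) \<Rightarrow> real \<Rightarrow> real \<Rightarrow> bool" where
  "uniformly_convex S B F q \<sigma> \<longleftrightarrow>
     (\<forall>x\<in>S. \<forall>y\<in>S. \<forall>Gx\<in>subdiff S F x. \<forall>Gy\<in>subdiff S F y.
        inner (Gx - Gy) (x - y) \<ge> \<sigma> * bnorm B (x - y) powr q)"

definition tensor_step ::
  "'a::euclidean_space set \<Rightarrow> ('a \<Rightarrow> 'a) \<Rightarrow> ('a \<Rightarrow> real) \<Rightarrow> (nat \<Rightarrow> 'a \<Rightarrow> 'a list \<Rightarrow> real)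
    \<Rightarrow> ('a \<Rightarrow> real) \<Rightarrow> nat \<Rightarrow> real \<Rightarrow> 'a \<Rightarrow> 'a \<Rightarrow> bool" where
  "tensor_step S B f Df h p H x y \<longleftrightarrow> y \<in> S \<and>
     (\<forall>z\<in>S. taylor f Df p x y + H / fact (p+1) * bnorm B (y - x) ^ (p+1) + h y
           \<le> taylor f Df p x z + H / fact (p+1) * bnorm B (z - x) ^ (p+1) + h z)"

end

theory Submission
  imports Defs
begin

lemma taylor1d:
  fixes g :: "nat \<Rightarrow> real \<Rightarrow> real" and C :: real and p :: nat
  assumes p1: "p \<ge> 1"
    and der: "\<And>m t. m < p \<Longrightarrow> 0 \<le> t \<Longrightarrow> t \<le> 1 \<Longrightarrow> (g m has_real_derivative g (Suc m) t) (at t)"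
    and lip: "\<And>t. 0 \<le> t \<Longrightarrow> t \<le> 1 \<Longrightarrow> g p t - g p 0 \<le> C * t"
  shows "g 0 1 \<le> (\<Sum>m\<le>p. g m 0 / fact m) + C / fact (p+1)"
proof -
  define diff where "diff m s = g m s - C * s^(p+1-m) / fact (p+1-m)" for m s
  have D: "\<forall>m t. m < p \<and> 0 \<le> t \<and> t \<le> 1 \<longrightarrow> DERIV (diff m) t :> diff (Suc m) t"
  proof (intro allI impI)
    fix m t assume a: "m < p \<and> 0 \<le> t \<and> t \<le> (1::real)"
    have e: "p + 1 - m = Suc (p - m)" "p + 1 - Suc m = p - m" using a by auto
    have "DERIV (\<lambda>s. C * s^(Suc (p-m)) / fact (Suc (p-m))) t :> C * (real (Suc (p-m)) * t^(p-m)) / fact (Suc (p-m))"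
      using DERIV_cdivide[OF DERIV_cmult[OF DERIV_pow[of "Suc (p-m)" t], of C], of "fact (Suc (p-m))"] by simp
    moreover have "C * (real (Suc (p-m)) * t^(p-m)) / fact (Suc (p-m)) = C * t^(p-m) / fact (p-m)"
    proof -
      have "fact (Suc (p-m)) = real (Suc (p-m)) * (fact (p-m)::real)" by (simp add: fact_Suc)
      then show ?thesis by (simp del: of_nat_Suc)
    qed
    ultimately have "DERIV (\<lambda>s. C * s^(Suc (p-m)) / fact (Suc (p-m))) t :> C * t^(p-m) / fact (p-m)" by simp
    then show "DERIV (diff m) t :> diff (Suc m) t"
      unfolding diff_def e using DERIV_diff[OF der[of m t]] a by auto
  qed
  obtain t where t: "0 < t" "t < 1"
    and eq: "diff 0 1 = (\<Sum>m<p. (diff m 0 / fact m) * (1 - 0)^m) + (diff p t / fact p) * (1 - 0)^p"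
    using Taylor[of p diff "diff 0" 0 1 0 1, OF _ refl D] p1 by auto
  have d0: "diff m 0 = g m 0" if "m < p" for m using that by (simp add: diff_def)
  have "diff 0 1 = g 0 1 - C / fact (p+1)" by (simp add: diff_def)
  moreover have "diff p t = g p t - C * t" by (simp add: diff_def)
  moreover have "(\<Sum>m<p. (diff m 0 / fact m) * (1 - 0)^m) = (\<Sum>m<p. g m 0 / fact m)"
    by (rule sum.cong) (auto simp: d0)
  moreover have "(\<Sum>m\<le>p. g m 0 / fact m) = (\<Sum>m<p. g m 0 / fact m) + g p 0 / fact p"
    by (simp add: lessThan_Suc_atMost[symmetric])
  moreover have "(g p t - C * t) / fact p \<le> g p 0 / fact p"
    using lip[of t] t by (simp add: divide_right_mono)
  ultimately show ?thesis using eq by simp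
qed


definition mlin :: "nat \<Rightarrow> ('a::euclidean_space list \<Rightarrow> real) \<Rightarrow> bool" where
  "mlin n A \<longleftrightarrow> (\<forall>i<n. \<forall>us. length us = n \<longrightarrow> linear (\<lambda>v. A (us[i:=v])))"

lemma mlin_head: "mlin (Suc n) A \<Longrightarrow> length us = n \<Longrightarrow> linear (\<lambda>v. A (v#us))"
proof -
  assume a: "mlin (Suc n) A" "length us = n"
  have "linear (\<lambda>v. A ((u#us)[0:=v]))" for u
    using a unfolding mlin_def by (metis length_Cons zero_less_Suc)
  then show ?thesis by simp
qed

lemma mlin_tail: "mlin (Suc n) A \<Longrightarrow> mlin n (\<lambda>us. A (v#us))"
  unfolding mlin_def
proof (intro allI impI)
  fix i us assume a: "\<forall>i<Suc n. \<forall>us. length us = Suc n \<longrightarrow> linear (\<lambda>v. A (us[i := v]))"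
    "i < n" "length (us::'a list) = n"
  have "linear (\<lambda>w. A ((v#us)[Suc i := w]))" using a(1)[rule_format, of "Suc i" "v#us"] a(2,3) by simp
  then show "linear (\<lambda>w. A (v # us[i := w]))" by simp
qed

lemma mlin_diff: "mlin n A \<Longrightarrow> mlin n A' \<Longrightarrow> mlin n (\<lambda>us. A us - A' us)"
  unfolding mlin_def using linear_compose_sub by blast

lemma mlin_hom: "mlin n A \<Longrightarrow> length us = n \<Longrightarrow> A (map (scaleR c) us) = c^n * A us"
proof (induction n arbitrary: A us)
  case 0 then show ?case by simp
next
  case (Suc n)
  then obtain u vs where us: "us = u # vs" "length vs = n" by (cases us) auto
  have "A (map (scaleR c) us) = A (c *\<^sub>R u # map (scaleR c) vs)" using us by simp
  also have "\<dots> = c * A (u # map (scaleR c) vs)"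
    using linear_scale[OF mlin_head[OF Suc.prems(1), of "map (scaleR c) vs"]] us by simp
  also have "A (u # map (scaleR c) vs) = c^n * A (u # vs)"
    using Suc.IH[OF mlin_tail[OF Suc.prems(1)] us(2)] by simp
  finally show ?case using us by simp
qed

lemma mlin_bound: "mlin n A \<Longrightarrow> \<exists>M. \<forall>us. length us = n \<longrightarrow> \<bar>A us\<bar> \<le> M * prod_list (map norm us)"
proof (induction n arbitrary: A)
  case 0
  show ?case by (rule exI[of _ "\<bar>A []\<bar>"]) simp
next
  case (Suc n)
  have "\<forall>b. \<exists>M. \<forall>us. length us = n \<longrightarrow> \<bar>A (b#us)\<bar> \<le> M * prod_list (map norm us)"
    using Suc.IH[OF mlin_tail[OF Suc.prems]] by blast
  then obtain Mf where Mf: "\<And>b us. length us = n \<Longrightarrow> \<bar>A (b#us)\<bar> \<le> Mf b * prod_list (map norm us)"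
    by metis
  show ?case
  proof (rule exI[of _ "\<Sum>b\<in>Basis. \<bar>Mf b\<bar>"], intro allI impI)
    fix us :: "'a list" assume l: "length us = Suc n"
    then obtain u vs where us: "us = u # vs" "length vs = n" by (cases us) auto
    have lin: "linear (\<lambda>v. A (v#vs))" using mlin_head[OF Suc.prems us(2)] .
    have "A (u#vs) = A ((\<Sum>b\<in>Basis. inner u b *\<^sub>R b) # vs)" by (simp add: euclidean_representation)
    also have "\<dots> = (\<Sum>b\<in>Basis. inner u b * A (b#vs))"
      using linear_sum[OF lin, of "\<lambda>b. inner u b *\<^sub>R b" Basis] linear_scale[OF lin]
      by (simp add: o_def)
    finally have e: "A (u#vs) = (\<Sum>b\<in>Basis. inner u b * A (b#vs))" .
    have P: "0 \<le> prod_list (map norm vs)" by (induction vs) auto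
    have "\<bar>A (u#vs)\<bar> \<le> (\<Sum>b\<in>Basis. \<bar>inner u b * A (b#vs)\<bar>)" unfolding e by (rule sum_abs)
    also have "\<dots> \<le> (\<Sum>b\<in>Basis. norm u * (\<bar>Mf b\<bar> * prod_list (map norm vs)))"
    proof (rule sum_mono)
      fix b :: 'a assume b: "b \<in> Basis"
      have "\<bar>A (b#vs)\<bar> \<le> \<bar>Mf b\<bar> * prod_list (map norm vs)"
      proof -
        have "Mf b * prod_list (map norm vs) \<le> \<bar>Mf b\<bar> * prod_list (map norm vs)"
          using P by (intro mult_right_mono) auto
        then show ?thesis using Mf[OF us(2), of b] by linarith
      qed
      then show "\<bar>inner u b * A (b#vs)\<bar> \<le> norm u * (\<bar>Mf b\<bar> * prod_list (map norm vs))"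
        unfolding abs_mult using Basis_le_norm[OF b, of u] by (simp add: mult_mono)
    qed
    also have "\<dots> = (\<Sum>b\<in>Basis. \<bar>Mf b\<bar>) * prod_list (map norm us)"
      using us by (simp add: sum_distrib_left sum_distrib_right algebra_simps)
    finally show "\<bar>A us\<bar> \<le> (\<Sum>b\<in>Basis. \<bar>Mf b\<bar>) * prod_list (map norm us)" using us by simp
  qed
qed

lemma deriv_eq_open:
  assumes "open U" "x \<in> U" "\<And>z. z \<in> U \<Longrightarrow> \<phi> z = \<psi> z"
    "(\<phi> has_derivative F1) (at x)" "(\<psi> has_derivative F2) (at x)"
  shows "F1 = F2"
proof -
  have "(\<psi> has_derivative F1) (at x)"
    using has_derivative_transform_within_open[OF assms(4,1,2)] assms(3) by blast
  then show ?thesis using has_derivative_unique assms(5) by blast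
qed

lemma Df_mlin:
  fixes Df :: "nat \<Rightarrow> 'a::euclidean_space \<Rightarrow> 'a list \<Rightarrow> real"
  assumes fdiff: "p_times_diff_on p U f Df" and U: "open U"
  shows "k \<le> p \<Longrightarrow> x \<in> U \<Longrightarrow> mlin k (Df k x)"
proof (induction k arbitrary: x)
  case 0 then show ?case by (simp add: mlin_def)
next
  case (Suc k)
  have kp: "k < p" using Suc.prems by simp
  have D: "\<And>x us. x \<in> U \<Longrightarrow> length us = k \<Longrightarrow>
     ((\<lambda>z. Df k z us) has_derivative (\<lambda>v. Df (Suc k) x (us @ [v]))) (at x)"
    using fdiff kp unfolding p_times_diff_on_def by blast
  show ?case unfolding mlin_def
  proof (intro allI impI)
    fix i and ws :: "'a list" assume i: "i < Suc k" and ws: "length ws = Suc k"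
    define us where "us = butlast ws"
    define w where "w = last ws"
    have "ws \<noteq> []" using ws by auto
    then have uw: "ws = us @ [w]" "length us = k" using ws unfolding us_def w_def by auto
    show "linear (\<lambda>v. Df (Suc k) x (ws[i := v]))"
    proof (cases "i = k")
      case True
      then have "(\<lambda>v. Df (Suc k) x (ws[i := v])) = (\<lambda>v. Df (Suc k) x (us @ [v]))"
        using uw by (simp add: list_update_append)
      then show ?thesis using has_derivative_linear[OF D[OF Suc.prems(2) uw(2)]] by simp
    next
      case False
      then have ik: "i < k" using i by simp
      have Lz: "\<And>z. z \<in> U \<Longrightarrow> linear (\<lambda>v. Df k z (us[i:=v]))"
        using Suc.IH Suc.prems ik uw(2) unfolding mlin_def by simp
      have e: "(\<lambda>v. Df (Suc k) x (ws[i := v])) = (\<lambda>v. Df (Suc k) x (us[i:=v] @ [w]))"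
        using uw ik by (simp add: list_update_append)
      have Dv: "\<And>v. ((\<lambda>z. Df k z (us[i:=v])) has_derivative (\<lambda>y. Df (Suc k) x (us[i:=v] @ [y]))) (at x)"
        using D[OF Suc.prems(2)] uw(2) by simp
      show ?thesis unfolding e
      proof (rule linearI)
        fix a b
        have "(\<lambda>y. Df (Suc k) x (us[i:=a+b] @ [y])) = (\<lambda>y. Df (Suc k) x (us[i:=a] @ [y]) + Df (Suc k) x (us[i:=b] @ [y]))"
          by (rule deriv_eq_open[OF U Suc.prems(2) _ Dv has_derivative_add[OF Dv Dv]])
             (simp add: linear_add[OF Lz])
        then show "Df (Suc k) x (us[i := a + b] @ [w]) = Df (Suc k) x (us[i := a] @ [w]) + Df (Suc k) x (us[i := b] @ [w])"
          by metis
      next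
        fix c a
        have "(\<lambda>y. Df (Suc k) x (us[i:=c *\<^sub>R a] @ [y])) = (\<lambda>y. c * Df (Suc k) x (us[i:=a] @ [y]))"
          by (rule deriv_eq_open[OF U Suc.prems(2) _ Dv has_derivative_mult_right[OF Dv]])
             (simp add: linear_scale[OF Lz])
        then show "Df (Suc k) x (us[i := c *\<^sub>R a] @ [w]) = c *\<^sub>R Df (Suc k) x (us[i := a] @ [w])"
          by (metis real_scaleR_def)
      qed
    qed
  qed
qed


lemma B_lin: "self_adj_pos_def B \<Longrightarrow> linear B"
  unfolding self_adj_pos_def_def by simp

lemma B_nonneg: assumes "self_adj_pos_def B" shows "0 \<le> inner (B x) x"
proof (cases "x = 0")
  case True then show ?thesis using linear_0[OF B_lin[OF assms]] by simp
next
  case False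
  have "0 < inner (B x) x" using assms False unfolding self_adj_pos_def_def by blast
  then show ?thesis by simp
qed

lemma bnorm_nonneg: "self_adj_pos_def B \<Longrightarrow> 0 \<le> bnorm B x"
  unfolding bnorm_def using B_nonneg by simp

lemma bnorm_scale: assumes "self_adj_pos_def B" shows "bnorm B (c *\<^sub>R x) = \<bar>c\<bar> * bnorm B x"
proof -
  have "inner (B (c *\<^sub>R x)) (c *\<^sub>R x) = c^2 * inner (B x) x"
    using linear_scale[OF B_lin[OF assms]] by (simp add: power2_eq_square)
  then show ?thesis unfolding bnorm_def by (simp add: real_sqrt_mult)
qed

lemma bnorm_zero: assumes "self_adj_pos_def B" "bnorm B x = 0" shows "x = 0"
  using assms unfolding self_adj_pos_def_def bnorm_def by force

lemma bnorm_commute: assumes "self_adj_pos_def B" shows "bnorm B (x - y) = bnorm B (y - x)"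
proof -
  have "y - x = (-1) *\<^sub>R (x - y)" by simp
  then show ?thesis using bnorm_scale[OF assms, of "-1" "x - y"] by simp
qed

lemma norm_le_bnorm:
  fixes B :: "'a::euclidean_space \<Rightarrow> 'a"
  assumes B: "self_adj_pos_def B" shows "\<exists>K>0. \<forall>x. norm x \<le> K * bnorm B x"
proof -
  have lin: "linear B" using B_lin[OF B] .
  then have bl: "bounded_linear B" using linear_conv_bounded_linear by blast
  have cont: "continuous_on (sphere 0 1) (\<lambda>x. inner (B x) x)"
    by (intro continuous_intros linear_continuous_on bl)
  obtain b :: 'a where b: "b \<in> Basis" using nonempty_Basis by blast
  have ne: "sphere (0::'a) 1 \<noteq> {}" using b by (metis empty_iff mem_sphere_0 norm_Basis)
  obtain x0 where x0: "x0 \<in> sphere 0 1" "\<And>y. y \<in> sphere 0 1 \<Longrightarrow> inner (B x0) x0 \<le> inner (B y) y"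
    using continuous_attains_inf[OF compact_sphere ne cont] by blast
  define m where "m = inner (B x0) x0"
  have "x0 \<noteq> 0" using x0(1) by auto
  then have mpos: "m > 0" using B unfolding m_def self_adj_pos_def_def by blast
  show ?thesis
  proof (rule exI[of _ "1 / sqrt m"], intro conjI allI)
    show "1 / sqrt m > 0" using mpos by simp
    fix x :: 'a
    show "norm x \<le> 1 / sqrt m * bnorm B x"
    proof (cases "x = 0")
      case True then show ?thesis using bnorm_nonneg[OF B, of x] mpos by simp
    next
      case False
      define u where "u = (1 / norm x) *\<^sub>R x"
      have u: "u \<in> sphere 0 1" using False unfolding u_def by simp
      have xu: "x = norm x *\<^sub>R u" using False unfolding u_def by simp
      have "bnorm B x = norm x * bnorm B u" using bnorm_scale[OF B, of "norm x" u] xu by simp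
      moreover have "sqrt m \<le> bnorm B u" unfolding bnorm_def using x0(2)[OF u] m_def by simp
      ultimately have "norm x * sqrt m \<le> bnorm B x" by (simp add: mult_left_mono)
      then show ?thesis using mpos by (simp add: field_simps)
    qed
  qed
qed

lemma form_bound:
  fixes B :: "'a::euclidean_space \<Rightarrow> 'a"
  assumes B: "self_adj_pos_def B" and A: "mlin p A" and p1: "p \<ge> 1"
  shows "\<bar>A (replicate p d)\<bar> \<le> form_norm B p A * bnorm B d ^ p"
proof -
  obtain K where K: "K > 0" "\<And>x. norm x \<le> K * bnorm B x" using norm_le_bnorm[OF B] by blast
  obtain M where M: "\<And>us. length us = p \<Longrightarrow> \<bar>A us\<bar> \<le> M * prod_list (map norm us)"
    using mlin_bound[OF A] by blast
  let ?X = "{\<bar>A (replicate p u)\<bar> | u. bnorm B u \<le> 1}"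
  have bdd: "bdd_above ?X"
  proof (rule bdd_aboveI)
    fix r assume "r \<in> ?X"
    then obtain u where u: "r = \<bar>A (replicate p u)\<bar>" "bnorm B u \<le> 1" by blast
    have nu: "norm u \<le> K" using K(2)[of u] u(2) K(1) by (smt (verit) mult_left_le)
    have "r \<le> M * norm u ^ p" using M[of "replicate p u"] u(1) by (simp add: prod_list_replicate)
    also have "\<dots> \<le> \<bar>M\<bar> * K ^ p" 
      by (intro mult_mono power_mono nu) auto
    finally show "r \<le> \<bar>M\<bar> * K ^ p" .
  qed
  show ?thesis
  proof (cases "bnorm B d = 0")
    case True
    then have d: "d = 0" using bnorm_zero[OF B] by blast
    have "A (replicate p d) = A (map (scaleR 0) (replicate p d))" using d by simp
    also have "\<dots> = 0" using mlin_hom[OF A, of "replicate p d" 0] p1 by simp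
    finally show ?thesis using True p1 by (simp add: zero_power)
  next
    case False
    then have bp: "bnorm B d > 0" using bnorm_nonneg[OF B, of d] by simp
    define u where "u = (1 / bnorm B d) *\<^sub>R d"
    have bu: "bnorm B u \<le> 1" using bnorm_scale[OF B, of "1 / bnorm B d" d] bp unfolding u_def by simp
    have "d = bnorm B d *\<^sub>R u" using bp unfolding u_def by simp
    then have "replicate p d = map (scaleR (bnorm B d)) (replicate p u)" by (metis map_replicate)
    then have "A (replicate p d) = bnorm B d ^ p * A (replicate p u)"
      using mlin_hom[OF A length_replicate, of "bnorm B d" u] by (simp only:)
    moreover have "\<bar>A (replicate p u)\<bar> \<le> form_norm B p A"
      unfolding form_norm_def using bu by (intro cSup_upper bdd) blast
    ultimately show ?thesis using bp by (simp add: abs_mult mult.commute mult_left_mono)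
  qed
qed


lemma taylor_bound:
  fixes B :: "'a::euclidean_space \<Rightarrow> 'a" and Df :: "nat \<Rightarrow> 'a \<Rightarrow> 'a list \<Rightarrow> real"
  assumes B: "self_adj_pos_def B" and p1: "p \<ge> 1" and U: "open U" and S: "convex S" "S \<subseteq> U"
    and fdiff: "p_times_diff_on p U f Df"
    and Lip: "\<forall>y\<in>S. \<forall>z\<in>S. form_norm B p (\<lambda>us. Df p y us - Df p z us) \<le> L * bnorm B (y - z)"
    and x: "x \<in> S" and y: "y \<in> S"
  shows "f y \<le> taylor f Df p x y + L / fact (p+1) * bnorm B (y - x)^(p+1)"
    and "taylor f Df p x y \<le> f y + L / fact (p+1) * bnorm B (y - x)^(p+1)"
proof -
  define d where "d = y - x"
  define g where "g m t = Df m (x + t *\<^sub>R d) (replicate m d)" for m t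
  define C where "C = L * bnorm B d ^ (p+1)"
  have seg: "x + t *\<^sub>R d \<in> S" if "0 \<le> t" "t \<le> 1" for t
  proof -
    have "(1 - t) *\<^sub>R x + t *\<^sub>R y \<in> S" using convexD[OF S(1) x y, of "1 - t" t] that by simp
    moreover have "(1 - t) *\<^sub>R x + t *\<^sub>R y = x + t *\<^sub>R d" unfolding d_def by (simp add: algebra_simps)
    ultimately show ?thesis by simp
  qed
  have der: "(g m has_real_derivative g (Suc m) t) (at t)" if m: "m < p" and t: "0 \<le> t" "t \<le> 1" for m t
  proof -
    define z where "z = x + t *\<^sub>R d"
    have zU: "z \<in> U" using seg[OF t] S(2) unfolding z_def by blast
    have Dz: "((\<lambda>w. Df m w (replicate m d)) has_derivative (\<lambda>v. Df (Suc m) z (replicate m d @ [v]))) (at z)"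
      using fdiff m zU unfolding p_times_diff_on_def by simp
    have lin: "((\<lambda>s. x + s *\<^sub>R d) has_derivative (\<lambda>h. h *\<^sub>R d)) (at t)"
      by (auto intro!: derivative_eq_intros)
    have comp: "((\<lambda>s. Df m (x + s *\<^sub>R d) (replicate m d)) has_derivative
        (\<lambda>h. Df (Suc m) z (replicate m d @ [h *\<^sub>R d]))) (at t)"
      using has_derivative_compose[OF lin Dz[unfolded z_def]] unfolding z_def by simp
    have "(\<lambda>h. Df (Suc m) z (replicate m d @ [h *\<^sub>R d])) = (\<lambda>h. g (Suc m) t * h)"
    proof
      fix h
      have "Df (Suc m) z (replicate m d @ [h *\<^sub>R d]) = h * Df (Suc m) z (replicate m d @ [d])"
        using linear_scale[OF has_derivative_linear[OF Dz], of h d] by simp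
      then show "Df (Suc m) z (replicate m d @ [h *\<^sub>R d]) = g (Suc m) t * h"
        unfolding g_def z_def by (simp add: replicate_append_same)
    qed
    then show ?thesis using comp unfolding has_field_derivative_def g_def by simp
  qed
  have lipg: "\<bar>g p t - g p 0\<bar> \<le> C * t" if t: "0 \<le> t" "t \<le> 1" for t
  proof -
    define z where "z = x + t *\<^sub>R d"
    have zS: "z \<in> S" using seg[OF t] unfolding z_def .
    define A where "A = (\<lambda>us. Df p z us - Df p x us)"
    have mA: "mlin p A" unfolding A_def
      by (rule mlin_diff; rule Df_mlin[OF fdiff U]) (use zS x S(2) in auto)
    have "\<bar>g p t - g p 0\<bar> = \<bar>A (replicate p d)\<bar>" unfolding A_def g_def z_def by simp
    also have "\<dots> \<le> form_norm B p A * bnorm B d ^ p" by (rule form_bound[OF B mA p1])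
    also have "\<dots> \<le> (L * bnorm B (z - x)) * bnorm B d ^ p"
      using Lip zS x unfolding A_def by (intro mult_right_mono zero_le_power bnorm_nonneg[OF B]) auto
    also have "bnorm B (z - x) = t * bnorm B d" unfolding z_def using bnorm_scale[OF B, of t d] t by simp
    finally show ?thesis unfolding C_def by (simp add: algebra_simps)
  qed
  have g01: "g 0 1 = f y" using fdiff y S(2) unfolding g_def d_def p_times_diff_on_def by auto
  have tay: "(\<Sum>m\<le>p. g m 0 / fact m) = taylor f Df p x y"
  proof -
    have "(\<Sum>m\<le>p. g m 0 / fact m) = g 0 0 / fact 0 + (\<Sum>m=Suc 0..p. g m 0 / fact m)"
      unfolding atMost_atLeast0 by (rule sum.atLeast_Suc_atMost) simp
    moreover have "g 0 0 = f x" using fdiff x S(2) unfolding g_def p_times_diff_on_def by auto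
    ultimately show ?thesis unfolding taylor_def g_def d_def by simp
  qed
  have "g 0 1 \<le> (\<Sum>m\<le>p. g m 0 / fact m) + C / fact (p+1)"
    by (rule taylor1d[of p g, OF p1 der]) (use lipg in \<open>auto simp: abs_le_iff\<close>)
  then show "f y \<le> taylor f Df p x y + L / fact (p+1) * bnorm B (y - x)^(p+1)"
    using g01 tay unfolding C_def d_def by simp
  have "(\<lambda>t. - g 0 t) 1 \<le> (\<Sum>m\<le>p. (\<lambda>t. - g m t) 0 / fact m) + C / fact (p+1)"
    apply (rule taylor1d[of p "\<lambda>m t. - g m t", OF p1])
    using DERIV_minus[OF der] lipg by (auto simp: abs_le_iff)
  then have "- g 0 1 \<le> - (\<Sum>m\<le>p. g m 0 / fact m) + C / fact (p+1)"
    by (simp add: sum_negf)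
  then show "taylor f Df p x y \<le> f y + L / fact (p+1) * bnorm B (y - x)^(p+1)"
    using g01 tay unfolding C_def d_def by simp
qed


lemma poch_lower: "(0::real) \<le> a \<Longrightarrow> a ^ n \<le> pochhammer a n"
proof -
  assume a: "0 \<le> a"
  have "(\<Prod>i<n. a) \<le> (\<Prod>i<n. a + of_nat i)" by (rule prod_mono) (use a in auto)
  then show ?thesis by (simp add: pochhammer_prod atLeast0LessThan)
qed

lemma poch_upper: "(0::real) \<le> a \<Longrightarrow> pochhammer a n \<le> (a + n) ^ n"
proof -
  assume a: "0 \<le> a"
  have "(\<Prod>i<n. a + of_nat i) \<le> (\<Prod>i<n. a + n)" by (rule prod_mono) (use a in auto)
  then show ?thesis by (simp add: pochhammer_prod atLeast0LessThan)
qed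

lemma rate:
  fixes \<delta> :: "nat \<Rightarrow> real" and c :: real and p :: nat
  assumes c: "0 \<le> c"
    and rec: "\<And>k t. 0 \<le> t \<Longrightarrow> t \<le> 1 \<Longrightarrow> \<delta> (Suc k) \<le> (1 - t) * \<delta> k + c * t^(p+1)"
  shows "pochhammer (real k) (p+1) * \<delta> k \<le> real k * (real p + 1)^(p+1) * c"
proof (induction k)
  case 0 then show ?case by (simp add: pochhammer_rec)
next
  case (Suc k)
  define Q where "Q = pochhammer (real k + 1) p"
  have Qpos: "Q > 0" unfolding Q_def by (rule pochhammer_pos) simp
  have Qle: "Q \<le> (real k + real p + 1) ^ p"
    using poch_upper[of "real k + 1" p] unfolding Q_def by (simp add: add_ac)
  have Pk: "pochhammer (real k) (p+1) = real k * Q" unfolding Q_def by (simp add: pochhammer_rec)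
  have Pk1: "pochhammer (real (Suc k)) (p+1) = (real k + real p + 1) * Q"
    unfolding Q_def by (simp add: pochhammer_rec' add_ac)
  define s where "s = real k + real p + 1"
  have spos: "s > 0" unfolding s_def by simp
  define t where "t = (real p + 1) / s"
  have t: "0 \<le> t" "t \<le> 1" unfolding t_def s_def by auto
  have r: "\<delta> (Suc k) \<le> (1 - t) * \<delta> k + c * t^(p+1)" by (rule rec[OF t])
  have "pochhammer (real (Suc k)) (p+1) * \<delta> (Suc k) = s * Q * \<delta> (Suc k)" unfolding Pk1 s_def by simp
  also have "\<dots> \<le> s * Q * ((1 - t) * \<delta> k + c * t^(p+1))"
    using r spos Qpos by (intro mult_left_mono) auto
  also have "\<dots> = real k * Q * \<delta> k + c * (real p + 1)^(p+1) * (Q / s^p)"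
  proof -
    define K where "K = (real p + 1)^(p+1)"
    have e1: "s * (1 - t) = real k" unfolding t_def s_def using spos by (simp add: field_simps s_def)
    have e2: "s * t^(p+1) = K / s^p" unfolding t_def K_def using spos
      by (simp add: power_divide field_simps)
    have "s * Q * ((1 - t) * \<delta> k + c * t^(p+1)) = Q * (s * (1 - t)) * \<delta> k + c * Q * (s * t^(p+1))"
      by (simp add: algebra_simps)
    also have "\<dots> = real k * Q * \<delta> k + c * K * (Q / s^p)" unfolding e1 e2 by simp
    finally show ?thesis unfolding K_def .
  qed
  also have "\<dots> \<le> real k * (real p + 1)^(p+1) * c + c * (real p + 1)^(p+1) * 1"
  proof (rule add_mono)
    show "real k * Q * \<delta> k \<le> real k * (real p + 1) ^ (p + 1) * c" using Suc.IH Pk by simp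
    have "Q / s^p \<le> 1" using Qle spos unfolding s_def by simp
    then show "c * (real p + 1)^(p+1) * (Q / s^p) \<le> c * (real p + 1)^(p+1) * 1"
      using c by (intro mult_left_mono) auto
  qed
  also have "\<dots> = real (Suc k) * (real p + 1)^(p+1) * c" by (simp add: algebra_simps)
  finally show ?case .
qed

lemma rate_final:
  fixes \<delta> :: "nat \<Rightarrow> real" and c :: real and p :: nat
  assumes c: "0 \<le> c"
    and rec: "\<And>k t. 0 \<le> t \<Longrightarrow> t \<le> 1 \<Longrightarrow> \<delta> (Suc k) \<le> (1 - t) * \<delta> k + c * t^(p+1)"
    and N: "N \<ge> 1"
  shows "\<delta> N \<le> (real p + 1)^(p+1) * c / real N ^ p"
proof (cases "\<delta> N \<le> 0")
  case True
  have "0 \<le> (real p + 1)^(p+1) * c / real N ^ p" using c by simp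
  then show ?thesis using True by linarith
next
  case False
  have "real N ^ (p+1) * \<delta> N \<le> pochhammer (real N) (p+1) * \<delta> N"
    using poch_lower[of "real N" "p+1"] False by (intro mult_right_mono) auto
  also have "\<dots> \<le> real N * (real p + 1)^(p+1) * c" by (rule rate[of c \<delta> p, OF c rec])
  finally have "real N * (real N ^ p * \<delta> N) \<le> real N * ((real p + 1)^(p+1) * c)" by (simp add: algebra_simps)
  then have "real N ^ p * \<delta> N \<le> (real p + 1)^(p+1) * c" using N by simp
  then show ?thesis using N by (simp add: field_simps)
qed


lemma final_alg:
  fixes p :: nat and q \<sigma> L D :: real
  assumes p1: "p \<ge> 1" and q2: "q \<ge> 2" and \<sigma>: "\<sigma> > 0" and L: "L > 0" and D: "D > 0"
    and pq: "real p > q - 1"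
    and N: "real N \<ge> 2 * real p * (q powr q / (q - 1) powr (q - 1) * 
             ((real p + 1) / fact p * ((q - 1) / q) powr (q - 1) * L * D powr (real p - q + 1) / \<sigma>)
               powr ((real p + 1) / real p)) powr (1 / (real p - q + 1))"
  shows "(real p + 1)^(p+1) * (L * D^(p+1) / fact p) / real N ^ p \<le>
     (1 / q) * ((\<sigma> powr (real p + 1) / (q - 1) powr (q - 1))
                 * (fact p / ((real p + 1) * L)) powr q) powr (1 / (real p - q + 1))"
proof -
  define P where "P = real p"
  have P1: "P \<ge> 1" using p1 unfolding P_def by simp
  define r where "r = P - q + 1"
  have r: "r > 0" using pq unfolding r_def P_def by simp
  define \<omega> where "\<omega> = (P + 1) / fact p * ((q - 1) / q) powr (q - 1) * L * D powr r / \<sigma>"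
  define X where "X = q powr q / (q - 1) powr (q - 1) * \<omega> powr ((P + 1) / P)"
  define W where "W = X powr (1 / r)"
  define c where "c = L * D^(p+1) / fact p"
  define Y where "Y = (\<sigma> powr (P + 1) / (q - 1) powr (q - 1)) * (fact p / ((P + 1) * L)) powr q"
  define T where "T = (1 / q) * Y powr (1 / r)"
  have fp: "fact p > (0::real)" by simp
  have q1: "q - 1 > 0" "q > 0" using q2 by auto
  have \<omega>pos: "\<omega> > 0" unfolding \<omega>_def using q1 \<sigma> L D P1 fp by (intro divide_pos_pos mult_pos_pos) auto
  have Xpos: "X > 0" unfolding X_def using \<omega>pos q1 by simp
  have Wpos: "W > 0" unfolding W_def using Xpos by simp
  have cpos: "c > 0" unfolding c_def using L D by simp
  have Ypos: "Y > 0" unfolding Y_def using \<sigma> q1 L P1 by simp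
  have Tpos: "T > 0" unfolding T_def using Ypos q1 by simp
  have lnw: "ln \<omega> = ln (P + 1) - ln (fact p) + (q - 1) * (ln (q - 1) - ln q) + ln L + r * ln D - ln \<sigma>"
    unfolding \<omega>_def using q1 \<sigma> L D P1 fp by (simp add: ln_mult ln_div)
  have lnX: "ln X = q * ln q - (q - 1) * ln (q - 1) + (P + 1) / P * ln \<omega>"
    unfolding X_def using q1 \<omega>pos by (simp add: ln_mult ln_div)
  have lnY: "ln Y = (P + 1) * ln \<sigma> - (q - 1) * ln (q - 1) + q * (ln (fact p) - ln (P + 1) - ln L)"
    unfolding Y_def using q1 \<sigma> L P1 fp by (simp add: ln_mult ln_div)
  have lnc: "ln ((P + 1) * c) = ln (P + 1) + ln L + (P + 1) * ln D - ln (fact p)"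
  proof -
    have "ln ((P + 1) * c) = ln (P + 1) + ln c" using cpos P1 by (simp add: ln_mult)
    moreover have "ln c = ln (L * D^(p+1)) - ln (fact p)" unfolding c_def using L D fp by (simp add: ln_div)
    moreover have "ln (L * D^(p+1)) = ln L + real (p+1) * ln D" using L D by (simp add: ln_mult ln_realpow algebra_simps)
    ultimately show ?thesis unfolding P_def by simp
  qed
  have lnT: "ln T = - ln q + ln Y / r" unfolding T_def using q1 Ypos by (simp add: ln_mult ln_div)
  have lnW: "ln W = ln X / r" unfolding W_def by simp
  have key: "r * ln ((P + 1) * c) = r * (- ln q) + ln Y + P * ln X"
  proof -
    have "P * ((P + 1) / P * ln \<omega>) = (P + 1) * ln \<omega>" using P1 by simp
    then have "P * ln X = P * q * ln q - P * (q - 1) * ln (q - 1) + (P + 1) * ln \<omega>"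
      unfolding lnX by (simp add: algebra_simps)
    then show ?thesis unfolding lnc lnY lnw r_def by (simp add: algebra_simps)
  qed
  have "ln ((P + 1) * c) = ln T + P * ln W"
    unfolding lnT lnW using key r by (simp add: field_simps)
  also have "\<dots> = ln (T * W ^ p)" using Tpos Wpos by (simp add: ln_mult ln_realpow P_def)
  finally have id: "(P + 1) * c = T * W ^ p"
    using cpos Tpos Wpos P1 by (subst ln_inj_iff[symmetric]) auto
  have NW: "real N \<ge> 2 * P * W" using N unfolding W_def X_def \<omega>_def r_def P_def by simp
  have Npos: "real N > 0" using NW P1 Wpos by (smt (verit) mult_pos_pos)
  have "(P + 1)^(p+1) * c / real N ^ p \<le> (P + 1)^(p+1) * c / (2 * P * W) ^ p"
    using NW P1 Wpos cpos Npos by (intro divide_left_mono power_mono mult_pos_pos zero_less_power) auto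
  also have "\<dots> = (P + 1) * c * ((P + 1) / (2 * P)) ^ p / W ^ p"
    using P1 Wpos by (simp add: power_divide power_mult_distrib field_simps)
  also have "\<dots> \<le> (P + 1) * c * 1 / W ^ p"
  proof -
    have "((P + 1) / (2 * P)) ^ p \<le> 1" using P1 by (intro power_le_one) auto
    then show ?thesis using cpos P1 Wpos
      by (intro divide_right_mono mult_left_mono) auto
  qed
  also have "\<dots> = T" using id Wpos by simp
  finally show ?thesis unfolding T_def Y_def c_def r_def P_def by simp
qed


theorem corollary2:
  fixes B :: "'a::euclidean_space \<Rightarrow> 'a"
    and S U :: "'a set"
    and f h :: "'a \<Rightarrow> real"
    and Df :: "nat \<Rightarrow> 'a \<Rightarrow> 'a list \<Rightarrow> real"
    and p :: nat and q \<sigma> L :: real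
    and xs :: 'a and x :: "nat \<Rightarrow> 'a"
  assumes B: "self_adj_pos_def B"
    and p2: "p \<ge> 2"
    and h: "proper_closed_convex S h"
    and U: "open U" "convex U" "S \<subseteq> U"
    and fconv: "convex_on U f"
    and fdiff: "p_times_diff_on p U f Df"
    and Lpos: "0 < L"
    and Lip: "\<forall>y\<in>S. \<forall>z\<in>S. form_norm B p (\<lambda>us. Df p y us - Df p z us) \<le> L * bnorm B (y - z)"
    and q2: "q \<ge> 2" and \<sigma>pos: "\<sigma> > 0"
    and uc: "uniformly_convex S B (\<lambda>z. f z + h z) q \<sigma>"
    and pq: "real p > q - 1"
    and xs: "xs \<in> S" "\<forall>y\<in>S. f xs + h xs \<le> f y + h y"
    and x0: "x 0 \<in> S"
    and steps: "\<forall>k. tensor_step S B f Df h p (real p * L) (x k) (x (Suc k))"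
    and Dfin: "bdd_above {bnorm B (y - xs) | y. y \<in> S \<and> f y + h y \<le> f (x 0) + h (x 0)}"
  shows "let F = (\<lambda>z. f z + h z);
             D = Sup {bnorm B (y - xs) | y. y \<in> S \<and> F y \<le> F (x 0)};
             \<omega> = (real p + 1) / fact p * ((q - 1) / q) powr (q - 1) * L * D powr (real p - q + 1) / \<sigma>;
             N = nat \<lceil>2 * real p * (q powr q / (q - 1) powr (q - 1) * \<omega> powr ((real p + 1) / real p))
                        powr (1 / (real p - q + 1))\<rceil> + 2
         in x N \<in> S \<and>
            F (x N) - F xs \<le> (1 / q) * ((\<sigma> powr (real p + 1) / (q - 1) powr (q - 1))
                 * (fact p / ((real p + 1) * L)) powr q) powr (1 / (real p - q + 1))"
proof -
  define F where "F = (\<lambda>z. f z + h z)"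
  define Lev where "Lev = {bnorm B (y - xs) | y. y \<in> S \<and> F y \<le> F (x 0)}"
  define D where "D = Sup Lev"
  define \<omega> where "\<omega> = (real p + 1) / fact p * ((q - 1) / q) powr (q - 1) * L * D powr (real p - q + 1) / \<sigma>"
  define N where "N = nat \<lceil>2 * real p * (q powr q / (q - 1) powr (q - 1) * \<omega> powr ((real p + 1) / real p))
                        powr (1 / (real p - q + 1))\<rceil> + 2"
  define T where "T = (1 / q) * ((\<sigma> powr (real p + 1) / (q - 1) powr (q - 1))
                 * (fact p / ((real p + 1) * L)) powr q) powr (1 / (real p - q + 1))"
  have p1: "p \<ge> 1" using p2 by simp
  have Sc: "convex S" and hc: "convex_on S h" using h unfolding proper_closed_convex_def by auto
  have xS: "x k \<in> S" for k
    using x0 steps unfolding tensor_step_def by (cases k) auto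
  have stepineq: "F (x (Suc k)) \<le> F z + L / fact p * bnorm B (z - x k)^(p+1)" if z: "z \<in> S" for k z
  proof -
    let ?y = "x (Suc k)" and ?x = "x k"
    let ?R = "bnorm B (?y - ?x) ^ (p+1)" and ?r = "bnorm B (z - ?x) ^ (p+1)"
    have R0: "0 \<le> ?R" using bnorm_nonneg[OF B] by simp
    have t1: "f ?y \<le> taylor f Df p ?x ?y + L / fact (p+1) * ?R"
      by (rule taylor_bound(1)[OF B p1 U(1) Sc U(3) fdiff Lip xS xS])
    have t2: "taylor f Df p ?x z \<le> f z + L / fact (p+1) * ?r"
      by (rule taylor_bound(2)[OF B p1 U(1) Sc U(3) fdiff Lip xS z])
    have ts: "taylor f Df p ?x ?y + real p * L / fact (p+1) * ?R + h ?y
           \<le> taylor f Df p ?x z + real p * L / fact (p+1) * ?r + h z"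
      using steps z unfolding tensor_step_def by blast
    have "L / fact (p+1) * ?R \<le> real p * L / fact (p+1) * ?R"
      using p1 Lpos R0 by (intro mult_right_mono divide_right_mono) auto
    then have "F ?y \<le> f z + h z + (L / fact (p+1) + real p * L / fact (p+1)) * ?r"
      using t1 t2 ts unfolding F_def by (simp add: algebra_simps)
    also have "L / fact (p+1) + real p * L / fact (p+1) = L / fact p"
      by (simp add: fact_Suc field_simps del: of_nat_Suc) (simp add: algebra_simps)
    finally show ?thesis unfolding F_def by simp
  qed
  have mono: "F (x (Suc k)) \<le> F (x k)" for k
    using stepineq[OF xS, of k k] p1 by (simp add: bnorm_def linear_0[OF B_lin[OF B]])
  have lev: "F (x k) \<le> F (x 0)" for k
    by (induction k) (use mono order_trans in auto)
  have bddL: "bdd_above Lev" using Dfin unfolding Lev_def F_def by simp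
  have inL: "bnorm B (x k - xs) \<in> Lev" for k unfolding Lev_def using xS lev by blast
  have Dk: "bnorm B (x k - xs) \<le> D" for k unfolding D_def by (rule cSup_upper[OF inL bddL])
  have D0: "0 \<le> D" using Dk[of 0] bnorm_nonneg[OF B, of "x 0 - xs"] by linarith
  define c where "c = L * D^(p+1) / fact p"
  have c0: "0 \<le> c" unfolding c_def using Lpos D0 by simp
  define \<delta> where "\<delta> k = F (x k) - F xs" for k
  have rec: "\<delta> (Suc k) \<le> (1 - t) * \<delta> k + c * t^(p+1)" if t: "0 \<le> t" "t \<le> 1" for k t
  proof -
    define z where "z = (1 - t) *\<^sub>R x k + t *\<^sub>R xs"
    have zS: "z \<in> S" unfolding z_def using convexD[OF Sc xS xs(1), of "1 - t" t] t by simp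
    have Fz: "F z \<le> (1 - t) * F (x k) + t * F xs"
    proof -
      have "f z \<le> (1 - t) * f (x k) + t * f xs"
        unfolding z_def by (rule convex_onD[OF fconv t]) (use xS xs(1) U(3) in auto)
      moreover have "h z \<le> (1 - t) * h (x k) + t * h xs"
        unfolding z_def by (rule convex_onD[OF hc t]) (use xS xs(1) in auto)
      ultimately show ?thesis unfolding F_def by (simp add: algebra_simps)
    qed
    have "z - x k = t *\<^sub>R (xs - x k)" unfolding z_def by (simp add: algebra_simps)
    then have "bnorm B (z - x k) = t * bnorm B (x k - xs)"
      using bnorm_scale[OF B, of t "xs - x k"] bnorm_commute[OF B, of xs "x k"] t by simp
    also have "\<dots> \<le> t * D" using Dk t by (simp add: mult_left_mono)
    finally have "bnorm B (z - x k) ^ (p+1) \<le> (t * D)^(p+1)"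
      by (intro power_mono) (use bnorm_nonneg[OF B] in auto)
    then have "L / fact p * bnorm B (z - x k) ^ (p+1) \<le> L / fact p * (t * D)^(p+1)"
      using Lpos by (intro mult_left_mono) auto
    also have "\<dots> = c * t^(p+1)" unfolding c_def by (simp add: power_mult_distrib)
    finally show ?thesis using stepineq[OF zS, of k] Fz unfolding \<delta>_def by (simp add: algebra_simps)
  qed
  have N1: "N \<ge> 1" unfolding N_def by simp
  have dN: "\<delta> N \<le> (real p + 1)^(p+1) * c / real N ^ p"
    by (rule rate_final[of c \<delta> p, OF c0 rec N1])
  have T0: "0 \<le> T" unfolding T_def using q2 by simp
  have main: "F (x N) - F xs \<le> T"
  proof (cases "D = 0")
    case True
    then have "c = 0" unfolding c_def by simp
    then show ?thesis using dN T0 unfolding \<delta>_def by simp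
  next
    case False
    then have Dp: "D > 0" using D0 by simp
    have NN: "real N \<ge> 2 * real p * (q powr q / (q - 1) powr (q - 1) * 
             ((real p + 1) / fact p * ((q - 1) / q) powr (q - 1) * L * D powr (real p - q + 1) / \<sigma>)
               powr ((real p + 1) / real p)) powr (1 / (real p - q + 1))"
      unfolding N_def \<omega>_def by linarith
    have "(real p + 1)^(p+1) * c / real N ^ p \<le> T"
      unfolding c_def T_def by (rule final_alg[OF p1 q2 \<sigma>pos Lpos Dp pq NN])
    then show ?thesis using dN unfolding \<delta>_def by simp
  qed
  show ?thesis
    using main xS[of N] unfolding Let_def F_def[symmetric] Lev_def[symmetric] D_def[symmetric]
      \<omega>_def[symmetric] N_def[symmetric] T_def[symmetric] by simp
qed

end
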